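(* Let $\mathcal{G}$ be an $A$-compatible multidigraph. (i) Let $\zeta$ be a spanning forest of $\mathcal{G}$ and $\tau$ a connected component of $\zeta$. If $\tau$ contains a node in $\mathcal{N}_i$ for some $i\ge0$, then the root of $\tau$ is in $\mathcal{N}_i\cup\mathcal{N}_0$. (ii) For $B\subseteq\mathcal{N}$ with $|B|=|F|$, $\Theta_\mathcal{G}(F,B)=\emptyset$ if $B$ contains two elements of $\mathcal{N}_i$ for some $i>0$.
   Context: $R$ is a partially ordered commutative ring. Let $d\ge0$, $m_0,m_1,\dots,m_d$ nonnegative integers with $m=m_0+m_1+\cdots+m_d$. $A\in R^{m\times m}$ and $b\in R^m$ have block form: for $i=1,\dots,d$ the rows with indices in $\mathcal{N}_i=\{1+\sum_{j<i}m_j,\dots,\sum_{j\le i}m_j\}$ have the form $(0\cdots0\ A_i\ 0\cdots0)$ with $A_i\in R^{m_i\times m_i}$ occupying the columns indexed by $\mathcal{N}_i$, and the corresponding part $b^i$ of $b$ has at most one nonzero entry; the last $m_0$ rows form an arbitrary $A_0\in R^{m_0\times m}$ with arbitrary $b^0\in R^{m_0}$. Let $\mathcal{N}=\{1,\dots,m+1\}$ and $\mathcal{N}_0=\{m-m_0+1,\dots,m+1\}$. Fix $j_i\in\mathcal{N}_i$ ($i=1,\dots,d$) such that $b_j=0$ for all $j\le m-m_0$ with $j\notin\{j_1,\dots,j_d\}$, and let $F=\{j_1,\dots,j_d,m+1\}$. A multidigraph $\mathcal{G}=(\mathcal{N},\mathcal{E})$ has source/target maps $s,t$, no self-loops, labeling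 $\pi\colon\mathcal{E}\to R$, and Laplacian $L_{ij}=\sum_{e:s(e)=j,t(e)=i}\pi(e)$ ($i\ne j$), $L_{ii}=-\sum_{k\ne i}L_{ki}$. $\mathcal{G}$ is $A$-compatible if (i) there is no edge from a node in $\mathcal{N}_i$ ($i\ge0$) to a node in $\mathcal{N}_j$ with $i\ne j$, $j\ge1$; (ii) for $\ell\notin\{j_1,\dots,j_d,m+1\}$, the $\ell$-th row of $L$ equals the $\ell$-th row of the $m\times(m+1)$ matrix $(A\,|\,b)$. Trees/forests: subgraphs whose underlying undirected graph is acyclic (connected for trees); a tree is rooted at $N$ if $N$ is its only node without outgoing edges; spanning means node set $\mathcal{N}$. For $F,B\subseteq\mathcal{N}$ with $|F|=|B|$, $\Theta_\mathcal{G}(F,B)$ is the set of spanning forests with $|B|$ components, each containing a node of $F$ and being a tree rooted at a node of $B$. *)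

theory Defs
  imports Main "Graph_Theory.Digraph_Component"
begin

definition uadj :: "('v,'e) pre_digraph \<Rightarrow> ('v \<times> 'v) set" where
  "uadj H = {(u,v). \<exists>e\<in>arcs H. (tail H e = u \<and> head H e = v) \<or> (tail H e = v \<and> head H e = u)}"

definition uconnected :: "('v,'e) pre_digraph \<Rightarrow> bool" where
  "uconnected H \<longleftrightarrow> (\<forall>u\<in>verts H. \<forall>v\<in>verts H. (u,v) \<in> (uadj H)\<^sup>*)"

text \<open>An undirected cycle of a multigraph: a nonempty list of pairwise distinct arcs
  es together with a closed vertex sequence vs (vs!0 = last vs, the other vertices
  pairwise distinct) such that arc es!k joins vs!k and vs!(k+1) in some orientation.
  (Two distinct parallel arcs form a cycle of length 2.)\<close>
definition ucycle :: "('v,'e) pre_digraph \<Rightarrow> 'e list \<Rightarrow> 'v list \<Rightarrow> bool" where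
  "ucycle H es vs \<longleftrightarrow> es \<noteq> [] \<and> distinct es \<and> set es \<subseteq> arcs H \<and>
     length vs = Suc (length es) \<and> hd vs = last vs \<and> distinct (tl vs) \<and>
     (\<forall>k<length es. (tail H (es!k) = vs!k \<and> head H (es!k) = vs!Suc k) \<or>
                     (tail H (es!k) = vs!Suc k \<and> head H (es!k) = vs!k))"

definition uacyclic :: "('v,'e) pre_digraph \<Rightarrow> bool" where
  "uacyclic H \<longleftrightarrow> \<not> (\<exists>es vs. ucycle H es vs)"

definition uforest :: "('v,'e) pre_digraph \<Rightarrow> bool" where
  "uforest H \<longleftrightarrow> uacyclic H"

definition utree :: "('v,'e) pre_digraph \<Rightarrow> bool" where
  "utree H \<longleftrightarrow> uacyclic H \<and> uconnected H"

definition rooted_tree :: "('v,'e) pre_digraph \<Rightarrow> 'v \<Rightarrow> bool" where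
  "rooted_tree H r \<longleftrightarrow> utree H \<and> r \<in> verts H \<and> out_arcs H r = {} \<and>
     (\<forall>v\<in>verts H. v \<noteq> r \<longrightarrow> out_arcs H v \<noteq> {})"

definition spanning_forest :: "('v,'e) pre_digraph \<Rightarrow> ('v,'e) pre_digraph \<Rightarrow> bool" where
  "spanning_forest Z G \<longleftrightarrow> spanning Z G \<and> uforest Z"

definition ucomponents :: "('v,'e) pre_digraph \<Rightarrow> ('v,'e) pre_digraph set" where
  "ucomponents H = {H \<restriction> {v \<in> verts H. (u,v) \<in> (uadj H)\<^sup>*} | u. u \<in> verts H}"

definition Theta :: "('v,'e) pre_digraph \<Rightarrow> 'v set \<Rightarrow> 'v set \<Rightarrow> ('v,'e) pre_digraph set" where
  "Theta G F B = {Z. spanning_forest Z G \<and> card (ucomponents Z) = card B \<and>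
      (\<forall>T\<in>ucomponents Z. (\<exists>f\<in>F. f \<in> verts T) \<and> (\<exists>r\<in>B. rooted_tree T r))}"

definition msum :: "nat \<Rightarrow> (nat \<Rightarrow> nat) \<Rightarrow> nat" where
  "msum d ms = (\<Sum>j\<le>d. ms j)"

text \<open>Index sets: N_i for 1 \<le> i \<le> d (blocks 1..d come first),
  N_0 = {m - m_0 + 1, ..., m + 1}.\<close>
definition Nblk :: "nat \<Rightarrow> (nat \<Rightarrow> nat) \<Rightarrow> nat \<Rightarrow> nat set" where
  "Nblk d ms i = (if i = 0 then {msum d ms - ms 0 + 1 .. msum d ms + 1}
                  else {1 + (\<Sum>j\<in>{1..<i}. ms j) .. (\<Sum>j\<in>{1..i}. ms j)})"

definition laplacian :: "('v,'e) pre_digraph \<Rightarrow> ('e \<Rightarrow> 'a::comm_ring) \<Rightarrow> 'v \<Rightarrow> 'v \<Rightarrow> 'a" where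
  "laplacian G \<pi> i j = (if i \<noteq> j then (\<Sum>e\<in>{e\<in>arcs G. tail G e = j \<and> head G e = i}. \<pi> e)
      else - (\<Sum>k\<in>verts G - {i}. (\<Sum>e\<in>{e\<in>arcs G. tail G e = i \<and> head G e = k}. \<pi> e)))"

definition block_form :: "nat \<Rightarrow> (nat \<Rightarrow> nat) \<Rightarrow> (nat \<Rightarrow> nat \<Rightarrow> 'a::comm_ring) \<Rightarrow> (nat \<Rightarrow> 'a) \<Rightarrow> bool" where
  "block_form d ms A b \<longleftrightarrow>
     (\<forall>i\<in>{1..d}. \<forall>l\<in>Nblk d ms i. \<forall>k\<in>{1..msum d ms}. k \<notin> Nblk d ms i \<longrightarrow> A l k = 0) \<and>
     (\<forall>i\<in>{1..d}. \<forall>k\<in>Nblk d ms i. \<forall>k'\<in>Nblk d ms i. b k \<noteq> 0 \<longrightarrow> b k' \<noteq> 0 \<longrightarrow> k = k')"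

definition Fset :: "nat \<Rightarrow> (nat \<Rightarrow> nat) \<Rightarrow> (nat \<Rightarrow> nat) \<Rightarrow> nat set" where
  "Fset d ms js = js ` {1..d} \<union> {msum d ms + 1}"

definition A_compatible :: "nat \<Rightarrow> (nat \<Rightarrow> nat) \<Rightarrow> (nat \<Rightarrow> nat) \<Rightarrow> (nat \<Rightarrow> nat \<Rightarrow> 'a::comm_ring) \<Rightarrow> (nat \<Rightarrow> 'a)
     \<Rightarrow> (nat,'e) pre_digraph \<Rightarrow> ('e \<Rightarrow> 'a) \<Rightarrow> bool" where
  "A_compatible d ms js A b G \<pi> \<longleftrightarrow>
     (\<forall>e\<in>arcs G. \<forall>i\<in>{0..d}. \<forall>j\<in>{1..d}. i \<noteq> j \<longrightarrow>
         \<not> (tail G e \<in> Nblk d ms i \<and> head G e \<in> Nblk d ms j)) \<and>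
     (\<forall>l\<in>{1..msum d ms}. l \<notin> Fset d ms js \<longrightarrow>
        (\<forall>k\<in>{1..msum d ms + 1}.
           laplacian G \<pi> l k = (if k \<le> msum d ms then A l k else b l)))"

end

theory Submission
  imports Defs
begin

lemma cycle_exists:
  assumes fin: "finite W" and ne: "x0 \<in> W"
    and step: "\<forall>x\<in>W. \<exists>e\<in>arcs H. tail H e = x \<and> head H e \<in> W"
  shows "\<exists>es vs. ucycle H es vs"
proof -
  from step obtain a where a: "\<And>x. x \<in> W \<Longrightarrow> a x \<in> arcs H \<and> tail H (a x) = x \<and> head H (a x) \<in> W"
    by metis
  define f where "f x = head H (a x)" for x
  define g where "g k = (f ^^ k) x0" for k
  have gS: "g (Suc k) = f (g k)" for k by (simp add: g_def)
  have gW: "g k \<in> W" for k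
  proof (induction k)
    case 0 then show ?case using ne by (simp add: g_def)
  next
    case (Suc k) then show ?case using a[OF Suc] by (simp add: gS f_def)
  qed
  have sub: "g ` {..card W} \<subseteq> W" using gW by blast
  have "\<not> inj_on g {..card W}"
  proof
    assume inj0: "inj_on g {..card W}"
    have "card (g ` {..card W}) = Suc (card W)" using card_image[OF inj0] by simp
    moreover have "card (g ` {..card W}) \<le> card W" by (rule card_mono[OF fin sub])
    ultimately show False by linarith
  qed
  then obtain i j where ij: "i \<noteq> j" "g i = g j" unfolding inj_on_def by blast
  have "\<exists>p i. p > 0 \<and> g i = g (i + p)"
  proof (cases "i < j")
    case True then show ?thesis using ij by (intro exI[of _ "j - i"] exI[of _ i]) auto
  next
    case False then show ?thesis using ij by (intro exI[of _ "i - j"] exI[of _ j]) auto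
  qed
  define p where "p = (LEAST p. p > 0 \<and> (\<exists>i. g i = g (i + p)))"
  have pP: "p > 0 \<and> (\<exists>i. g i = g (i + p))"
  proof -
    have ex: "\<exists>p. p > 0 \<and> (\<exists>i. g i = g (i + p))" using \<open>\<exists>p i. p > 0 \<and> g i = g (i + p)\<close> by blast
    show ?thesis unfolding p_def by (rule LeastI_ex[OF ex])
  qed
  then obtain i0 where p0: "p > 0" and i0: "g i0 = g (i0 + p)" by blast
  have inj: "k1 = k2" if "g k1 = g k2" "k1 < k2 + p" "k2 < k1 + p" for k1 k2
  proof (rule ccontr)
    assume ne: "k1 \<noteq> k2"
    show False
    proof (cases "k1 < k2")
      case True
      have h: "g k1 = g (k1 + (k2 - k1))" using True that by simp
      have "p \<le> k2 - k1" unfolding p_def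
        by (intro Least_le conjI exI[of _ k1]) (use True h in simp_all)
      then show False using that True by linarith
    next
      case False
      then have F: "k2 < k1" using ne by simp
      have h: "g k2 = g (k2 + (k1 - k2))" using F that by simp
      have "p \<le> k1 - k2" unfolding p_def
        by (intro Least_le conjI exI[of _ k2]) (use F h in simp_all)
      then show False using that F by linarith
    qed
  qed
  define vs where "vs = map (\<lambda>k. g (i0 + k)) [0..<Suc p]"
  define es where "es = map (\<lambda>k. a (g (i0 + k))) [0..<p]"
  have tlvs: "tl vs = map (\<lambda>k. g (i0 + k)) [1..<Suc p]"
    unfolding vs_def by (simp add: upt_conv_Cons del: upt_Suc)
  have "ucycle H es vs"
    unfolding ucycle_def
  proof (intro conjI)
    show "es \<noteq> []" using p0 by (simp add: es_def)
    show "distinct es" unfolding es_def distinct_map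
    proof
      show "inj_on (\<lambda>k. a (g (i0 + k))) (set [0..<p])"
      proof (rule inj_onI)
        fix x y assume "x \<in> set [0..<p]" "y \<in> set [0..<p]" "a (g (i0 + x)) = a (g (i0 + y))"
        moreover have "g (i0 + x) = g (i0 + y)"
          using a[OF gW[of "i0+x"]] a[OF gW[of "i0+y"]] \<open>a (g (i0 + x)) = a (g (i0 + y))\<close> by metis
        ultimately show "x = y" using inj[of "i0+x" "i0+y"] by auto
      qed
    qed simp
    show "set es \<subseteq> arcs H" using a gW by (auto simp: es_def)
    show "length vs = Suc (length es)" by (simp add: vs_def es_def)
    have l: "last vs = g (i0 + p)" by (simp add: vs_def)
    have h: "hd vs = g i0" by (simp add: vs_def upt_conv_Cons del: upt_Suc)
    show "hd vs = last vs" using i0 l h by simp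
    show "distinct (tl vs)" unfolding tlvs distinct_map
    proof
      show "inj_on (\<lambda>k. g (i0 + k)) (set [1..<Suc p])"
      proof (rule inj_onI)
        fix x y assume "x \<in> set [1..<Suc p]" "y \<in> set [1..<Suc p]" "g (i0 + x) = g (i0 + y)"
        then show "x = y" using inj[of "i0+x" "i0+y"] by auto
      qed
    qed simp
    show "\<forall>k<length es. tail H (es ! k) = vs ! k \<and> head H (es ! k) = vs ! Suc k \<or>
        tail H (es ! k) = vs ! Suc k \<and> head H (es ! k) = vs ! k"
    proof (intro allI impI disjI1)
      fix k assume k: "k < length es"
      then have kp: "k < p" by (simp add: es_def)
      have e: "es ! k = a (g (i0 + k))" using kp by (simp add: es_def)
      have v1: "vs ! k = g (i0 + k)" using kp by (simp add: vs_def nth_map del: upt_Suc)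
      have v2: "vs ! Suc k = g (i0 + Suc k)" using kp
        by (simp add: vs_def nth_map del: upt_Suc)
      show "tail H (es ! k) = vs ! k \<and> head H (es ! k) = vs ! Suc k"
        using a[OF gW[of "i0+k"]] e v1 v2 gS[of "i0+k"] by (simp add: f_def)
    qed
  qed
  then show ?thesis by blast
qed



lemma msum_split: "msum d ms = ms 0 + (\<Sum>j\<in>{1..d}. ms j)"
  unfolding msum_def by (simp add: atMost_atLeast0 sum.atLeast_Suc_atMost)

lemma cover_aux: fixes v n :: nat and ms :: "nat \<Rightarrow> nat" shows "1 \<le> v \<Longrightarrow> v \<le> (\<Sum>j\<in>{1..n}. ms j) \<Longrightarrow>
   \<exists>j\<in>{1..n}. 1 + (\<Sum>k\<in>{1..<j}. ms k) \<le> v \<and> v \<le> (\<Sum>k\<in>{1..j}. ms k)"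
proof (induction n)
  case 0 then show ?case by simp
next
  case (Suc n)
  show ?case
  proof (cases "v \<le> (\<Sum>j\<in>{1..n}. ms j)")
    case True then show ?thesis using Suc by force
  next
    case False
    have "{1..<Suc n} = {1..n}" by auto
    then show ?thesis using False Suc.prems by (intro bexI[of _ "Suc n"]) auto
  qed
qed

lemma cover: assumes "v \<in> {1..msum d ms + 1}" shows "\<exists>j\<le>d. v \<in> Nblk d ms j"
proof (cases "v \<le> (\<Sum>j\<in>{1..d}. ms j)")
  case True
  then obtain j where "j \<in> {1..d}" "1 + (\<Sum>k\<in>{1..<j}. ms k) \<le> v \<and> v \<le> (\<Sum>k\<in>{1..j}. ms k)"
    using cover_aux[where v=v and n=d and ms=ms] assms by auto
  then show ?thesis by (intro exI[of _ j]) (auto simp: Nblk_def)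
next
  case False
  then have "v \<in> Nblk d ms 0" using assms by (auto simp: Nblk_def msum_split)
  then show ?thesis by blast
qed

lemma blk_le: assumes "1 \<le> i" "i \<le> d" "v \<in> Nblk d ms i" shows "v \<le> (\<Sum>j\<in>{1..d}. ms j)"
proof -
  have "(\<Sum>j\<in>{1..i}. ms j) \<le> (\<Sum>j\<in>{1..d}. ms j)" using assms by (intro sum_mono2) auto
  then show ?thesis using assms by (auto simp: Nblk_def)
qed

lemma disj0: assumes "1 \<le> i" "i \<le> d" "v \<in> Nblk d ms i" shows "v \<notin> Nblk d ms 0"
  using blk_le[OF assms] by (auto simp: Nblk_def msum_split)

lemma disj_lt: assumes "1 \<le> i" "i < k" "v \<in> Nblk d ms i" shows "v \<notin> Nblk d ms k"
proof -
  have "(\<Sum>j\<in>{1..i}. ms j) \<le> (\<Sum>j\<in>{1..<k}. ms j)" using assms by (intro sum_mono2) auto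
  then show ?thesis using assms by (auto simp: Nblk_def)
qed

lemma disj: assumes "1 \<le> i" "1 \<le> k" "i \<noteq> k" "v \<in> Nblk d ms i" shows "v \<notin> Nblk d ms k"
proof (cases "i < k")
  case True then show ?thesis using disj_lt assms by blast
next
  case False
  then have "k < i" using assms by simp
  then show ?thesis using disj_lt[of k i v d ms] assms by auto
qed

lemma part1:
  fixes A :: "nat \<Rightarrow> nat \<Rightarrow> 'a::comm_ring"
  assumes G_graph: "loopfree_digraph G" "finite (arcs G)" "verts G = {1..msum d ms + 1}"
    and compat: "A_compatible d ms js A b G \<pi>"
    and Z: "spanning_forest Z G" and T: "T \<in> ucomponents Z" and r: "rooted_tree T r"
    and i: "i \<le> d" and v: "v \<in> verts T" "v \<in> Nblk d ms i"
  shows "r \<in> Nblk d ms i \<union> Nblk d ms 0"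
proof (rule ccontr)
  assume nr: "r \<notin> Nblk d ms i \<union> Nblk d ms 0"
  from Z have sub: "subgraph Z G" and vZ: "verts G = verts Z"
    by (auto simp: spanning_forest_def spanning_def)
  from sub have aZ: "arcs Z \<subseteq> arcs G" and tl: "tail Z = tail G" and hd: "head Z = head G"
    by (auto simp: subgraph_def compatible_def)
  from T obtain u where Tdef: "T = Z \<restriction> {v \<in> verts Z. (u,v) \<in> (uadj Z)\<^sup>*}"
    by (auto simp: ucomponents_def)
  have vT: "verts T \<subseteq> verts G" using Tdef vZ by auto
  have finT: "finite (verts T)" by (rule finite_subset[OF vT]) (simp add: G_graph(3))
  have wf: "wf_digraph G" using G_graph(1) unfolding loopfree_digraph_def by blast
  have forb: "\<forall>e\<in>arcs G. \<forall>i\<in>{0..d}. \<forall>j\<in>{1..d}. i \<noteq> j \<longrightarrow>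
         \<not> (tail G e \<in> Nblk d ms i \<and> head G e \<in> Nblk d ms j)"
    using compat by (simp add: A_compatible_def)
  have clos: "head G e \<in> Nblk d ms i \<union> Nblk d ms 0"
    if e: "e \<in> arcs G" and te: "tail G e \<in> Nblk d ms i \<union> Nblk d ms 0" for e
  proof -
    have "head G e \<in> verts G" using wf_digraph.head_in_verts[OF wf e] .
    then obtain j where j: "j \<le> d" "head G e \<in> Nblk d ms j" using cover G_graph(3) by blast
    show ?thesis
    proof (cases "j = 0 \<or> j = i")
      case True then show ?thesis using j by auto
    next
      case False
      then have j1: "j \<in> {1..d}" using j by auto
      from te show ?thesis
      proof
        assume "tail G e \<in> Nblk d ms i"
        moreover have "\<not> (tail G e \<in> Nblk d ms i \<and> head G e \<in> Nblk d ms j)"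
          using forb[rule_format, OF e, of i j] j1 i False by simp
        ultimately show ?thesis using j by blast
      next
        assume "tail G e \<in> Nblk d ms 0"
        moreover have "\<not> (tail G e \<in> Nblk d ms 0 \<and> head G e \<in> Nblk d ms j)"
          using forb[rule_format, OF e, of 0 j] j1 False by simp
        ultimately show ?thesis using j by blast
      qed
    qed
  qed
  have "\<exists>es vs. ucycle T es vs"
  proof (rule cycle_exists[of "verts T \<inter> (Nblk d ms i \<union> Nblk d ms 0)" v])
    show "finite (verts T \<inter> (Nblk d ms i \<union> Nblk d ms 0))" using finT by simp
    show "v \<in> verts T \<inter> (Nblk d ms i \<union> Nblk d ms 0)" using v by simp
    show "\<forall>x\<in>verts T \<inter> (Nblk d ms i \<union> Nblk d ms 0). \<exists>e\<in>arcs T. tail T e = x \<and>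
            head T e \<in> verts T \<inter> (Nblk d ms i \<union> Nblk d ms 0)"
    proof
      fix x assume x: "x \<in> verts T \<inter> (Nblk d ms i \<union> Nblk d ms 0)"
      then have "x \<noteq> r" using nr by auto
      then have "out_arcs T x \<noteq> {}" using r x by (auto simp: rooted_tree_def)
      then obtain e where e: "e \<in> arcs T" "tail T e = x" by (auto simp: out_arcs_def)
      have eG: "e \<in> arcs G" and tG: "tail G e = x" and hT: "head T e \<in> verts T"
        and hG: "head T e = head G e"
        using e Tdef aZ tl hd by auto
      have "head G e \<in> Nblk d ms i \<union> Nblk d ms 0" using clos[OF eG] tG x by auto
      then show "\<exists>e\<in>arcs T. tail T e = x \<and> head T e \<in> verts T \<inter> (Nblk d ms i \<union> Nblk d ms 0)"
        using e hT hG by auto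
    qed
  qed
  then show False using r by (auto simp: rooted_tree_def utree_def uacyclic_def)
qed


lemma comps_image: "ucomponents Z = (\<lambda>u. Z \<restriction> {v \<in> verts Z. (u,v) \<in> (uadj Z)\<^sup>*}) ` verts Z"
  by (auto simp: ucomponents_def)

lemma comps_disj:
  assumes T1: "T1 \<in> ucomponents Z" and T2: "T2 \<in> ucomponents Z"
    and w: "w \<in> verts T1" "w \<in> verts T2"
  shows "T1 = T2"
proof -
  let ?R = "(uadj Z)\<^sup>*"
  have symR: "sym ?R"
    by (rule sym_rtrancl) (auto simp: sym_def uadj_def)
  obtain u1 where u1: "T1 = Z \<restriction> {v \<in> verts Z. (u1,v) \<in> ?R}" using T1 by (auto simp: ucomponents_def)
  obtain u2 where u2: "T2 = Z \<restriction> {v \<in> verts Z. (u2,v) \<in> ?R}" using T2 by (auto simp: ucomponents_def)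
  have a: "(u1,w) \<in> ?R" "(u2,w) \<in> ?R" using w u1 u2 by auto
  have b: "(w,u2) \<in> ?R" "(w,u1) \<in> ?R" using a symR by (auto simp: sym_def)
  have "(u1,u2) \<in> ?R" using a(1) b(1) by (rule rtrancl_trans)
  moreover have "(u2,u1) \<in> ?R" using a(2) b(2) by (rule rtrancl_trans)
  ultimately have "{v \<in> verts Z. (u1,v) \<in> ?R} = {v \<in> verts Z. (u2,v) \<in> ?R}"
    by (auto intro: rtrancl_trans)
  then show ?thesis using u1 u2 by simp
qed

lemma root_unique: "rooted_tree T x \<Longrightarrow> rooted_tree T y \<Longrightarrow> x = y"
  unfolding rooted_tree_def by blast

lemma part2:
  fixes A :: "nat \<Rightarrow> nat \<Rightarrow> 'a::comm_ring" and G :: "(nat,'e) pre_digraph"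
  assumes js_in: "\<forall>i\<in>{1..d}. js i \<in> Nblk d ms i"
    and G_graph: "loopfree_digraph G" "finite (arcs G)" "verts G = {1..msum d ms + 1}"
    and compat: "A_compatible d ms js A b G \<pi>"
    and BG: "B \<subseteq> verts G"
    and i: "i \<in> {1..d}" and xy: "x \<in> B" "y \<in> B" "x \<noteq> y" "x \<in> Nblk d ms i" "y \<in> Nblk d ms i"
    and Z: "Z \<in> Theta G (Fset d ms js) B"
  shows False
proof -
  let ?C = "ucomponents Z"
  let ?F = "Fset d ms js"
  have sf: "spanning_forest Z G" and cardC: "card ?C = card B"
    and propT: "\<And>T. T \<in> ?C \<Longrightarrow> (\<exists>f\<in>?F. f \<in> verts T) \<and> (\<exists>r\<in>B. rooted_tree T r)"
    using Z by (auto simp: Theta_def)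
  have vZ: "verts Z = verts G" using sf by (auto simp: spanning_forest_def spanning_def)
  have finB: "finite B" by (rule finite_subset[OF BG]) (simp add: G_graph(3))
  have finC: "finite ?C" unfolding comps_image by (rule finite_imageI) (simp add: vZ G_graph(3))
  define rt where "rt T = (SOME r. r \<in> B \<and> rooted_tree T r)" for T :: "(nat,'e) pre_digraph"
  have rt: "rt T \<in> B \<and> rooted_tree T (rt T)" if "T \<in> ?C" for T
    unfolding rt_def using propT[OF that] by (metis (mono_tags, lifting) someI_ex)
  have injrt: "inj_on rt ?C"
  proof (rule inj_onI)
    fix T1 T2 assume t: "T1 \<in> ?C" "T2 \<in> ?C" "rt T1 = rt T2"
    have "rt T1 \<in> verts T1" "rt T2 \<in> verts T2" using rt[OF t(1)] rt[OF t(2)]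
      by (auto simp: rooted_tree_def)
    then show "T1 = T2" using comps_disj[OF t(1) t(2)] t(3) by simp
  qed
  have "rt ` ?C \<subseteq> B" using rt by blast
  moreover have "card (rt ` ?C) = card B" using card_image[OF injrt] cardC by simp
  ultimately have img: "rt ` ?C = B" using card_subset_eq[OF finB] by blast
  have key: "js i \<in> verts T" if T: "T \<in> ?C" and rT: "rooted_tree T z" and z: "z \<in> Nblk d ms i" for T z
  proof -
    obtain f where f: "f \<in> ?F" "f \<in> verts T" using propT[OF T] by blast
    have z0: "z \<notin> Nblk d ms 0" using disj0[of i d z ms] i z by auto
    from f(1) show ?thesis unfolding Fset_def
    proof
      assume "f \<in> js ` {1..d}"
      then obtain l where l: "l \<in> {1..d}" "f = js l" by blast
      have fl: "f \<in> Nblk d ms l" using js_in l by auto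
      have "z \<in> Nblk d ms l \<union> Nblk d ms 0"
        using part1[OF G_graph compat sf T rT, of l f] l f fl by auto
      then have "z \<in> Nblk d ms l" using z0 by blast
      then have "l = i" using disj[of i l z d ms] i l z by auto
      then show ?thesis using l f by simp
    next
      assume "f \<in> {msum d ms + 1}"
      then have "f \<in> Nblk d ms 0" by (auto simp: Nblk_def)
      then have "z \<in> Nblk d ms 0 \<union> Nblk d ms 0"
        using part1[OF G_graph compat sf T rT, of 0 f] f by auto
      then show ?thesis using z0 by blast
    qed
  qed
  obtain Tx where Tx: "Tx \<in> ?C" "rt Tx = x" using img xy(1) by (metis imageE)
  obtain Ty where Ty: "Ty \<in> ?C" "rt Ty = y" using img xy(2) by (metis imageE)
  have rx: "rooted_tree Tx x" using rt[OF Tx(1)] Tx(2) by simp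
  have ry: "rooted_tree Ty y" using rt[OF Ty(1)] Ty(2) by simp
  have "js i \<in> verts Tx" using key[OF Tx(1) rx xy(4)] .
  moreover have "js i \<in> verts Ty" using key[OF Ty(1) ry xy(5)] .
  ultimately have "Tx = Ty" using comps_disj[OF Tx(1) Ty(1)] by simp
  then show False using root_unique[OF rx] ry xy(3) by simp
qed

theorem lemma4p5:
  fixes d :: nat and ms :: "nat \<Rightarrow> nat" and js :: "nat \<Rightarrow> nat"
    and A :: "nat \<Rightarrow> nat \<Rightarrow> 'a::ordered_comm_ring" and b :: "nat \<Rightarrow> 'a"
    and G :: "(nat,'e) pre_digraph" and \<pi> :: "'e \<Rightarrow> 'a"
  assumes blocks: "block_form d ms A b"
    and js_in: "\<forall>i\<in>{1..d}. js i \<in> Nblk d ms i"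
    and b_zero: "\<forall>j\<in>{1..msum d ms - ms 0}. j \<notin> js ` {1..d} \<longrightarrow> b j = 0"
    and G_graph: "loopfree_digraph G" "finite (arcs G)" "verts G = {1..msum d ms + 1}"
    and compat: "A_compatible d ms js A b G \<pi>"
  shows "(\<forall>Z T r i. spanning_forest Z G \<longrightarrow> T \<in> ucomponents Z \<longrightarrow> rooted_tree T r \<longrightarrow>
            i \<le> d \<longrightarrow> verts T \<inter> Nblk d ms i \<noteq> {} \<longrightarrow> r \<in> Nblk d ms i \<union> Nblk d ms 0)
       \<and> (\<forall>B. B \<subseteq> verts G \<longrightarrow> card B = card (Fset d ms js) \<longrightarrow>
            (\<exists>i\<in>{1..d}. \<exists>x\<in>B. \<exists>y\<in>B. x \<noteq> y \<and> x \<in> Nblk d ms i \<and> y \<in> Nblk d ms i) \<longrightarrow>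
            Theta G (Fset d ms js) B = {})"
proof (intro conjI allI impI)
  fix Z T r i
  assume h: "spanning_forest Z G" "T \<in> ucomponents Z" "rooted_tree T r" "i \<le> d"
    "verts T \<inter> Nblk d ms i \<noteq> {}"
  then obtain v where "v \<in> verts T" "v \<in> Nblk d ms i" by blast
  then show "r \<in> Nblk d ms i \<union> Nblk d ms 0"
    using part1[OF G_graph compat h(1-4)] by blast
next
  fix B :: "nat set"
  assume h: "B \<subseteq> verts G" "card B = card (Fset d ms js)"
    "\<exists>i\<in>{1..d}. \<exists>x\<in>B. \<exists>y\<in>B. x \<noteq> y \<and> x \<in> Nblk d ms i \<and> y \<in> Nblk d ms i"
  then obtain i x y where ixy: "i \<in> {1..d}" "x \<in> B" "y \<in> B" "x \<noteq> y" "x \<in> Nblk d ms i" "y \<in> Nblk d ms i"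
    by blast
  show "Theta G (Fset d ms js) B = {}"
  proof (rule ccontr)
    assume "Theta G (Fset d ms js) B \<noteq> {}"
    then obtain Z where "Z \<in> Theta G (Fset d ms js) B" by blast
    then show False using part2[OF js_in G_graph compat h(1) ixy] by blast
  qed
qed

end
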